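(* Assume (H1). Let $h\ge0$ be an integer, $\mathbf{a}\in\mathbb{N}^I[h]$ and $m\in\{0,\dots,n\}$. Then $$\mathbb{P}_n(A_{u(m)}=\mathbf{a})=\mathbb{Q}_h(\mathbf{a})\,\frac{\mathbb{P}\big(|\mathbf{f}_{N_1(\mathbf{a})}|=m-h,\ |\mathbf{f}'_{1+N_2(\mathbf{a})}|=n+1-m\big)}{\mathbb{P}(|\mathbf{T}|=n+1)},$$ where $\mathbf{f}$ and $\mathbf{f}'$ are independent random forests.
   Context: Planar trees: finite subsets $T$ of the set of finite words over $\{1,2,\dots\}$ containing the empty word $\emptyset$, with $ui\in T\Rightarrow u\in T$ and $uj\in T$ for $1\le j\le i$. $c_u(T)$ = number of children, $|u|$ = word length; vertices ordered lexicographically (prefixes first), $u(k)$ the $k$-th vertex, $u(0)=\emptyset$. $|T|$ is the number of vertices. (H1): $\mu=(\mu_k)_{k\ge0}$ probability on $\mathbb{N}$ with $\mu_0+\mu_1\ne1$, $\sum_kk\mu_k=1$, $\sum_{k\le K}\mu_k=1$ for some integer $K>0$. $\mathbf{T}$ is a Galton–Watson tree with offspring law $\mu$ and $\mathbb{P}_n=\mathbb{P}(\cdot\mid|\mathbf{T}|=n+1)$ (for $n$ with positive conditioning probability). For $k\ge0$, $\mathbf{f}_k=(\mathbf{T}^1,\dots,\mathbf{T}^k)$ is a forest of $k$ i.i.d. such GW trees, with size $|\mathbf{f}_k|=\sum_i|\mathbf{T}^i|$. $I_K=\{(k,j):1\le j\le k\le K\}$; $\mathbb{N}^I[h]$ is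 the set of $c\in\mathbb{N}^{I_K}$ with $\sum_{i\in I_K}c_i=h$; $\mathbb{Q}_h(\mathbf{a})=\binom{h}{(\mathbf{a}_i)_{i\in I_K}}\prod_{(k,j)\in I_K}\mu_k^{\mathbf{a}_{k,j}}$ for $\mathbf{a}\in\mathbb{N}^I[h]$ (the multinomial law with parameters $h$ and $p_{k,j}=\mu_k$). For $\mathbf{a}\in\mathbb{R}^{I_K}$, $N_1(\mathbf{a})=\sum_{(k,j)}(j-1)\mathbf{a}_{k,j}$ and $N_2(\mathbf{a})=\sum_{(k,j)}(k-j)\mathbf{a}_{k,j}$. Lineage: $A_u=(A_{u,k,j})_{(k,j)\in I_K}$, where $A_{u,k,j}$ is the number of strict ancestors $v$ of $u$ with $c_v=k$ such that $u$ is a descendant of (or equal to) $vj$. *)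

theory Defs
  imports Complex_Main "HOL-Library.Sublist"
begin

text \<open>Planar trees: finite sets of words over positive integers (nat lists with letters \<ge> 1).\<close>
definition planar_tree :: "nat list set \<Rightarrow> bool" where
  "planar_tree T \<longleftrightarrow> finite T \<and> [] \<in> T \<and> (\<forall>w\<in>T. \<forall>x\<in>set w. 1 \<le> x) \<and>
     (\<forall>u i. u @ [i] \<in> T \<longrightarrow> u \<in> T \<and> (\<forall>j. 1 \<le> j \<and> j \<le> i \<longrightarrow> u @ [j] \<in> T))"

definition children :: "nat list set \<Rightarrow> nat list \<Rightarrow> nat" where
  "children T u = card {i. u @ [i] \<in> T}"

text \<open>Lexicographic order on words, prefixes first.\<close>
definition lex_less :: "nat list \<Rightarrow> nat list \<Rightarrow> bool" where
  "lex_less v u \<longleftrightarrow> (v, u) \<in> lexord {(a, b). a < b}"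

text \<open>The k-th vertex u(k) (u(0) is the root) in lexicographic order.\<close>
definition vertex :: "nat list set \<Rightarrow> nat \<Rightarrow> nat list" where
  "vertex T k = (THE u. u \<in> T \<and> card {v \<in> T. lex_less v u} = k)"

text \<open>Probability P(T = t) for a Galton--Watson tree with offspring law mu.\<close>
definition gw_weight :: "(nat \<Rightarrow> real) \<Rightarrow> nat list set \<Rightarrow> real" where
  "gw_weight \<mu> T = (\<Prod>u\<in>T. \<mu> (children T u))"

definition gw_size_prob :: "(nat \<Rightarrow> real) \<Rightarrow> nat \<Rightarrow> real" where
  "gw_size_prob \<mu> N = (\<Sum>T\<in>{T. planar_tree T \<and> card T = N}. gw_weight \<mu> T)"

text \<open>P(|f_k| = s) for a forest of k i.i.d. GW trees; s is an integer (probability 0 if s < 0).\<close>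
definition forest_size_prob :: "(nat \<Rightarrow> real) \<Rightarrow> nat \<Rightarrow> int \<Rightarrow> real" where
  "forest_size_prob \<mu> k s =
     (\<Sum>ts\<in>{ts. length ts = k \<and> (\<forall>T\<in>set ts. planar_tree T) \<and> int (\<Sum>T\<leftarrow>ts. card T) = s}.
        \<Prod>T\<leftarrow>ts. gw_weight \<mu> T)"

definition IK :: "nat \<Rightarrow> (nat \<times> nat) set" where
  "IK K = {(k, j). 1 \<le> j \<and> j \<le> k \<and> k \<le> K}"

definition lineage :: "nat list set \<Rightarrow> nat list \<Rightarrow> nat \<times> nat \<Rightarrow> nat" where
  "lineage T u kj = card {v. strict_prefix v u \<and> children T v = fst kj \<and> prefix (v @ [snd kj]) u}"

text \<open>P_n(A_{u(m)} = a), with the event A_{u(m)} = a compared on I_K.\<close>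
definition lineage_prob :: "(nat \<Rightarrow> real) \<Rightarrow> nat \<Rightarrow> nat \<Rightarrow> nat \<Rightarrow> (nat \<times> nat \<Rightarrow> nat) \<Rightarrow> real" where
  "lineage_prob \<mu> K n m a =
     (\<Sum>T\<in>{T. planar_tree T \<and> card T = n + 1 \<and> (\<forall>i\<in>IK K. lineage T (vertex T m) i = a i)}.
        gw_weight \<mu> T) / gw_size_prob \<mu> (n + 1)"

text \<open>Multinomial law Q_h(a) with p_{k,j} = mu_k.\<close>
definition Qh :: "(nat \<Rightarrow> real) \<Rightarrow> nat \<Rightarrow> nat \<Rightarrow> (nat \<times> nat \<Rightarrow> nat) \<Rightarrow> real" where
  "Qh \<mu> K h a = fact h / (\<Prod>i\<in>IK K. fact (a i)) * (\<Prod>(k, j)\<in>IK K. \<mu> k ^ a (k, j))"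

definition N1 :: "nat \<Rightarrow> (nat \<times> nat \<Rightarrow> nat) \<Rightarrow> nat" where
  "N1 K a = (\<Sum>(k, j)\<in>IK K. (j - 1) * a (k, j))"

definition N2 :: "nat \<Rightarrow> (nat \<times> nat \<Rightarrow> nat) \<Rightarrow> nat" where
  "N2 K a = (\<Sum>(k, j)\<in>IK K. (k - j) * a (k, j))"

end

theory Submission
  imports Defs
begin

lemma planar_prefix: "planar_tree T \<Longrightarrow> u @ v \<in> T \<Longrightarrow> u \<in> T"
proof (induction v rule: rev_induct)
  case Nil then show ?case by simp
next
  case (snoc x xs)
  then show ?case unfolding planar_tree_def by (metis append_assoc)
qed

lemma finite_down_closed:
  fixes S :: "nat set"
  assumes "finite S" "0 \<notin> S" "\<And>i j. i \<in> S \<Longrightarrow> 1 \<le> j \<Longrightarrow> j \<le> i \<Longrightarrow> j \<in> S"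
  shows "S = {1..card S}"
proof (cases "S = {}")
  case True then show ?thesis by simp
next
  case False
  have "S = {1..Max S}"
  proof
    show "S \<subseteq> {1..Max S}" using assms False by (auto simp: Suc_le_eq intro: gr0I)
    show "{1..Max S} \<subseteq> S"
    proof
      fix x assume "x \<in> {1..Max S}"
      then show "x \<in> S" using assms(3)[OF Max_in[OF assms(1) False], of x] by simp
    qed
  qed
  then show ?thesis by (metis card_atLeastAtMost diff_Suc_1)
qed

lemma children_iff:
  assumes "planar_tree T"
  shows "u @ [i] \<in> T \<longleftrightarrow> 1 \<le> i \<and> i \<le> children T u"
proof -
  let ?S = "{i. u @ [i] \<in> T}"
  have eq: "?S = (\<lambda>i. u @ [i]) -` T" by auto
  have fin: "finite ?S" unfolding eq
    by (rule finite_vimageI) (use assms in \<open>auto simp: planar_tree_def inj_on_def\<close>)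
  have z: "0 \<notin> ?S"
  proof
    assume "0 \<in> ?S"
    then have "u @ [0] \<in> T" by simp
    then have "1 \<le> (0::nat)" using assms unfolding planar_tree_def by (metis in_set_conv_decomp)
    then show False by simp
  qed
  have dc: "\<And>i j. i \<in> ?S \<Longrightarrow> 1 \<le> j \<Longrightarrow> j \<le> i \<Longrightarrow> j \<in> ?S"
    using assms unfolding planar_tree_def by blast
  have "?S = {1..card ?S}"
    by (rule finite_down_closed[OF fin z dc])
  then have "i \<in> ?S \<longleftrightarrow> i \<in> {1..card ?S}" by simp
  then show ?thesis unfolding children_def by simp
qed

definition node :: "nat list set list \<Rightarrow> nat list set" where
  "node ts = insert [] (\<Union>i<length ts. (\<lambda>w. Suc i # w) ` (ts!i))"

definition sub :: "nat list set \<Rightarrow> nat \<Rightarrow> nat list set" where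
  "sub T i = {w. Suc i # w \<in> T}"

lemma Cons_in_node: "i < length ts \<Longrightarrow> Suc i # w \<in> node ts \<longleftrightarrow> w \<in> ts ! i"
  unfolding node_def by auto

lemma node_cases: "v \<in> node ts \<Longrightarrow> v = [] \<or> (\<exists>i w. i < length ts \<and> w \<in> ts!i \<and> v = Suc i # w)"
  unfolding node_def by auto

lemma planar_nonempty: "planar_tree T \<Longrightarrow> [] \<in> T"
  by (simp add: planar_tree_def)

lemma planar_finite: "planar_tree T \<Longrightarrow> finite T"
  by (simp add: planar_tree_def)

lemma planar_node:
  assumes "\<forall>t\<in>set ts. planar_tree t"
  shows "planar_tree (node ts)"
  unfolding planar_tree_def
proof (intro conjI)
  show "finite (node ts)" using assms unfolding node_def by (auto simp: planar_tree_def)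
  show "[] \<in> node ts" by (simp add: node_def)
  show "\<forall>w\<in>node ts. \<forall>x\<in>set w. 1 \<le> x"
  proof (intro ballI)
  fix w x assume "w \<in> node ts" "x \<in> set w"
  then show "1 \<le> x"
  proof (cases rule: disjE[OF node_cases])
    assume "w = []" then show ?thesis using \<open>x \<in> set w\<close> by simp
  next
    assume "\<exists>i w'. i < length ts \<and> w' \<in> ts!i \<and> w = Suc i # w'"
    then obtain i w' where iw: "i < length ts" "w' \<in> ts!i" "w = Suc i # w'" by blast
    have "planar_tree (ts!i)" using assms iw(1) by simp
    then show ?thesis using iw \<open>x \<in> set w\<close> unfolding planar_tree_def by auto
  qed
  qed
  show "\<forall>u i. u @ [i] \<in> node ts \<longrightarrow> u \<in> node ts \<and> (\<forall>j. 1 \<le> j \<and> j \<le> i \<longrightarrow> u @ [j] \<in> node ts)"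
  proof (intro allI impI)
  fix u i assume A: "u @ [i] \<in> node ts"
  then obtain l w where lw: "l < length ts" "w \<in> ts!l" "u @ [i] = Suc l # w"
    using node_cases by blast
  have pl: "planar_tree (ts!l)" using assms lw(1) by simp
  show "u \<in> node ts \<and> (\<forall>j. 1 \<le> j \<and> j \<le> i \<longrightarrow> u @ [j] \<in> node ts)"
  proof (cases u)
    case Nil
    then have "w = []" "i = Suc l" using lw by auto
    have "\<forall>j. 1 \<le> j \<and> j \<le> i \<longrightarrow> [j] \<in> node ts"
    proof (intro allI impI)
      fix j :: nat assume j: "1 \<le> j \<and> j \<le> i"
      then have jl: "j - 1 < length ts" using lw(1) \<open>i = Suc l\<close> by linarith
      have "[] \<in> ts ! (j - 1)" using assms jl by (simp add: planar_tree_def)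
      then have "Suc (j - 1) # [] \<in> node ts" using Cons_in_node[OF jl] by blast
      then show "[j] \<in> node ts" using j by simp
    qed
    then show ?thesis using Nil by (simp add: node_def)
  next
    case (Cons y u')
    then have y: "y = Suc l" "w = u' @ [i]" using lw by auto
    then have "u' \<in> ts!l \<and> (\<forall>j. 1 \<le> j \<and> j \<le> i \<longrightarrow> u' @ [j] \<in> ts!l)"
      using pl lw(2) unfolding planar_tree_def by blast
    then show ?thesis using Cons y lw(1) by (simp add: Cons_in_node)
  qed
  qed
qed

lemma planar_decomp:
  assumes "planar_tree T"
  shows "T = node (map (sub T) [0..<children T []])"
    and "\<forall>i<children T []. planar_tree (sub T i)"
proof -
  have ci: "\<And>i. [i] \<in> T \<longleftrightarrow> 1 \<le> i \<and> i \<le> children T []"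
    using children_iff[OF assms, of "[]"] by simp
  show "T = node (map (sub T) [0..<children T []])"
  proof
    show "T \<subseteq> node (map (sub T) [0..<children T []])"
    proof
      fix w assume w: "w \<in> T"
      show "w \<in> node (map (sub T) [0..<children T []])"
      proof (cases w)
        case Nil then show ?thesis by (simp add: node_def)
      next
        case (Cons x w')
        have "1 \<le> x" using assms w Cons by (simp add: planar_tree_def)
        then obtain i where x: "x = Suc i" by (cases x) auto
        have "[x] \<in> T" using planar_prefix[OF assms, of "[x]" w'] w Cons by simp
        then have il: "i < children T []" using ci x by simp
        have "w' \<in> sub T i" using w Cons x by (simp add: sub_def)
        then show ?thesis using il Cons x by (simp add: Cons_in_node)
      qed
    qed
    show "node (map (sub T) [0..<children T []]) \<subseteq> T"
    proof
      fix w assume "w \<in> node (map (sub T) [0..<children T []])"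
      then consider "w = []" | i w' where "i < children T []" "w' \<in> sub T i" "w = Suc i # w'"
        using node_cases[of w] by fastforce
      then show "w \<in> T"
      proof cases
        case 1 then show ?thesis using assms by (simp add: planar_tree_def)
      next
        case 2 then show ?thesis by (simp add: sub_def)
      qed
    qed
  qed
  show "\<forall>i<children T []. planar_tree (sub T i)"
  proof (intro allI impI)
    fix i assume il: "i < children T []"
    have "[Suc i] \<in> T" using ci il by simp
    have fin: "finite (sub T i)"
    proof -
      have "sub T i = (\<lambda>w. Suc i # w) -` T" by (auto simp: sub_def)
      then show ?thesis using assms by (simp add: planar_tree_def finite_vimageI inj_on_def)
    qed
    show "planar_tree (sub T i)"
      unfolding planar_tree_def
    proof (intro conjI)
      show "finite (sub T i)" by (rule fin)
      show "[] \<in> sub T i" using \<open>[Suc i] \<in> T\<close> by (simp add: sub_def)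
      show "\<forall>w\<in>sub T i. \<forall>x\<in>set w. 1 \<le> x" using assms unfolding sub_def planar_tree_def by (metis list.set_intros(2) mem_Collect_eq)
      show "\<forall>u j. u @ [j] \<in> sub T i \<longrightarrow> u \<in> sub T i \<and> (\<forall>k. 1 \<le> k \<and> k \<le> j \<longrightarrow> u @ [k] \<in> sub T i)"
      proof (intro allI impI)
        fix u j assume "u @ [j] \<in> sub T i"
        then have "(Suc i # u) @ [j] \<in> T" by (simp add: sub_def)
        then show "u \<in> sub T i \<and> (\<forall>k. 1 \<le> k \<and> k \<le> j \<longrightarrow> u @ [k] \<in> sub T i)"
        proof -
          have "Suc i # u \<in> T \<and> (\<forall>k. 1 \<le> k \<and> k \<le> j \<longrightarrow> (Suc i # u) @ [k] \<in> T)"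
            using assms \<open>(Suc i # u) @ [j] \<in> T\<close> unfolding planar_tree_def by blast
          then show ?thesis by (simp add: sub_def)
        qed
      qed
    qed
  qed
qed

lemma node_sub: "i < length ts \<Longrightarrow> sub (node ts) i = ts ! i"
  by (auto simp: sub_def Cons_in_node)

lemma children_node_root:
  assumes "\<forall>t\<in>set ts. planar_tree t"
  shows "children (node ts) [] = length ts"
proof -
  have "{i. [] @ [i] \<in> node ts} = {1..length ts}"
  proof (intro set_eqI iffI)
    fix i assume "i \<in> {i. [] @ [i] \<in> node ts}"
    then show "i \<in> {1..length ts}" using node_cases[of "[i]" ts] by auto
  next
    fix i assume i: "i \<in> {1..length ts}"
    then have il: "i - 1 < length ts" by auto
    have "[] \<in> ts ! (i - 1)" using assms il by (simp add: planar_tree_def)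
    then have "Suc (i - 1) # [] \<in> node ts" using Cons_in_node[OF il] by blast
    then show "i \<in> {i. [] @ [i] \<in> node ts}" using i by simp
  qed
  then show ?thesis unfolding children_def by simp
qed

lemma children_node_Cons:
  "i < length ts \<Longrightarrow> children (node ts) (Suc i # u) = children (ts ! i) u"
  unfolding children_def by (simp add: Cons_in_node[symmetric])

lemma node_inj:
  assumes "\<forall>t\<in>set ts. planar_tree t" "\<forall>t\<in>set ts'. planar_tree t" "node ts = node ts'"
  shows "ts = ts'"
proof -
  have l: "length ts = length ts'"
    using children_node_root[OF assms(1)] children_node_root[OF assms(2)] assms(3) by simp
  show ?thesis
  proof (rule nth_equalityI[OF l])
    fix i assume "i < length ts"
    then show "ts ! i = ts' ! i" using node_sub[of i ts] node_sub[of i ts'] l assms(3) by simp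
  qed
qed

lemma node_decomp_eq:
  "node ts = insert [] (\<Union>i<length ts. (\<lambda>w. Suc i # w) ` (ts!i))"
  by (simp add: node_def)

lemma card_node:
  assumes "\<forall>t\<in>set ts. planar_tree t"
  shows "card (node ts) = 1 + sum_list (map card ts)"
proof -
  let ?U = "\<Union>i<length ts. (\<lambda>w. Suc i # w) ` (ts!i)"
  have fin: "\<forall>i\<in>{..<length ts}. finite ((\<lambda>w. Suc i # w) ` (ts!i))"
    using assms by (auto simp: planar_tree_def)
  have disj: "\<forall>i\<in>{..<length ts}. \<forall>j\<in>{..<length ts}. i \<noteq> j \<longrightarrow>
      (\<lambda>w. Suc i # w) ` (ts!i) \<inter> (\<lambda>w. Suc j # w) ` (ts!j) = {}" by auto
  have "card ?U = (\<Sum>i<length ts. card ((\<lambda>w. Suc i # w) ` (ts!i)))"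
    by (rule card_UN_disjoint[OF _ fin disj]) simp
  also have "\<dots> = (\<Sum>i<length ts. card (ts!i))"
    by (rule sum.cong) (auto simp: card_image inj_on_def)
  also have "\<dots> = sum_list (map card ts)"
    by (simp add: sum_list_sum_nth atLeast0LessThan)
  finally have "card ?U = sum_list (map card ts)" .
  moreover have "[] \<notin> ?U" by auto
  moreover have "finite ?U" using fin by auto
  ultimately show ?thesis by (simp add: node_def)
qed

lemma prod_list_nth: "prod_list (map f xs) = (\<Prod>i<length xs. f (xs ! i))"
proof (induction xs rule: rev_induct)
  case Nil then show ?case by simp
next
  case (snoc x xs)
  then show ?case by (simp add: nth_append)
qed

lemma weight_node:
  assumes "\<forall>t\<in>set ts. planar_tree t"
  shows "gw_weight \<mu> (node ts) = \<mu> (length ts) * prod_list (map (gw_weight \<mu>) ts)"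
proof -
  let ?U = "\<Union>i<length ts. (\<lambda>w. Suc i # w) ` (ts!i)"
  have fin: "\<forall>i\<in>{..<length ts}. finite ((\<lambda>w. Suc i # w) ` (ts!i))"
    using assms by (auto simp: planar_tree_def)
  have disj: "\<forall>i\<in>{..<length ts}. \<forall>j\<in>{..<length ts}. i \<noteq> j \<longrightarrow>
      (\<lambda>w. Suc i # w) ` (ts!i) \<inter> (\<lambda>w. Suc j # w) ` (ts!j) = {}" by auto
  have "(\<Prod>u\<in>?U. \<mu> (children (node ts) u)) =
      (\<Prod>i<length ts. \<Prod>u\<in>(\<lambda>w. Suc i # w) ` (ts!i). \<mu> (children (node ts) u))"
    by (rule prod.UNION_disjoint[OF _ fin disj]) simp
  also have "\<dots> = (\<Prod>i<length ts. gw_weight \<mu> (ts!i))"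
  proof (rule prod.cong[OF refl])
    fix i assume "i \<in> {..<length ts}"
    then have il: "i < length ts" by simp
    have "(\<Prod>u\<in>(\<lambda>w. Suc i # w) ` (ts!i). \<mu> (children (node ts) u)) =
        (\<Prod>w\<in>ts!i. \<mu> (children (node ts) (Suc i # w)))"
      by (subst prod.reindex) (auto simp: inj_on_def)
    also have "\<dots> = gw_weight \<mu> (ts!i)"
      by (simp add: gw_weight_def children_node_Cons[OF il])
    finally show "(\<Prod>u\<in>(\<lambda>w. Suc i # w) ` (ts!i). \<mu> (children (node ts) u)) = gw_weight \<mu> (ts!i)" .
  qed
  also have "\<dots> = prod_list (map (gw_weight \<mu>) ts)" by (simp add: prod_list_nth)
  finally have E: "(\<Prod>u\<in>?U. \<mu> (children (node ts) u)) = prod_list (map (gw_weight \<mu>) ts)" .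
  have "[] \<notin> ?U" by auto
  moreover have "finite ?U" using fin by auto
  ultimately have "gw_weight \<mu> (node ts) = \<mu> (children (node ts) []) * (\<Prod>u\<in>?U. \<mu> (children (node ts) u))"
    by (simp add: gw_weight_def node_def)
  then show ?thesis using E children_node_root[OF assms] by simp
qed

lemma lex_Nil_left [simp]: "lex_less [] u \<longleftrightarrow> u \<noteq> []"
  by (cases u) (auto simp: lex_less_def)

lemma lex_Nil_right [simp]: "\<not> lex_less v []"
  by (simp add: lex_less_def)

lemma lex_Cons [simp]: "lex_less (a # v) (b # w) \<longleftrightarrow> a < b \<or> a = b \<and> lex_less v w"
  by (simp add: lex_less_def)

lemma lex_irrefl [simp]: "\<not> lex_less u u"
  unfolding lex_less_def by (rule lexord_irreflexive) simp

lemma lex_trans: "lex_less u v \<Longrightarrow> lex_less v w \<Longrightarrow> lex_less u w"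
  unfolding lex_less_def by (erule (1) lexord_trans) (auto simp: trans_def)

lemma lex_linear: "lex_less u v \<or> u = v \<or> lex_less v u"
  unfolding lex_less_def by (rule lexord_linear) auto

definition pos :: "nat list set \<Rightarrow> nat list \<Rightarrow> nat" where
  "pos T u = card {v \<in> T. lex_less v u}"

lemma pos_Nil [simp]: "pos T [] = 0"
  by (simp add: pos_def)

lemma pos_lt_card: assumes "finite T" "u \<in> T" shows "pos T u < card T"
proof -
  have "u \<notin> {v \<in> T. lex_less v u}" by simp
  then have "{v \<in> T. lex_less v u} \<subset> T" using assms(2) by blast
  then show ?thesis unfolding pos_def using assms(1) by (rule psubset_card_mono[rotated])
qed

lemma pos_mono: assumes "finite T" "u \<in> T" "lex_less u v" shows "pos T u < pos T v"
proof -
  have "u \<notin> {w \<in> T. lex_less w u}" by simp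
  moreover have "u \<in> {w \<in> T. lex_less w v}" using assms by simp
  moreover have "{w \<in> T. lex_less w u} \<subseteq> {w \<in> T. lex_less w v}"
    using assms(3) by (auto intro: lex_trans)
  ultimately have "{w \<in> T. lex_less w u} \<subset> {w \<in> T. lex_less w v}" by blast
  then show ?thesis unfolding pos_def using assms(1) by (intro psubset_card_mono) auto
qed

lemma pos_inj: assumes "finite T" "u \<in> T" "v \<in> T" "pos T u = pos T v" shows "u = v"
  using lex_linear[of u v] pos_mono[OF assms(1) assms(2), of v] pos_mono[OF assms(1) assms(3), of u] assms(4)
  by auto

lemma pos_surj: assumes "finite T" "m < card T" shows "\<exists>u\<in>T. pos T u = m"
proof -
  have inj: "inj_on (pos T) T" using pos_inj[OF assms(1)] by (auto simp: inj_on_def)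
  have sub: "pos T ` T \<subseteq> {..<card T}" using pos_lt_card[OF assms(1)] by auto
  have "card (pos T ` T) = card {..<card T}" using card_image[OF inj] by simp
  then have "pos T ` T = {..<card T}" using sub by (intro card_subset_eq) auto
  then show ?thesis using assms(2) by (metis imageE lessThan_iff)
qed

lemma pos_ge1: assumes "planar_tree T" "u \<noteq> []" shows "1 \<le> pos T u"
proof -
  have "[] \<in> {v \<in> T. lex_less v u}" using assms planar_nonempty by auto
  moreover have "finite {v \<in> T. lex_less v u}" using planar_finite[OF assms(1)] by simp
  ultimately have "card {v \<in> T. lex_less v u} \<noteq> 0" by auto
  then show ?thesis by (simp add: pos_def)
qed

lemma pos_node:
  assumes "\<forall>t\<in>set ts. planar_tree t" "i < length ts"
  shows "pos (node ts) (Suc i # u) = 1 + sum_list (map card (take i ts)) + pos (ts!i) u"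
proof -
  let ?A = "\<Union>l<i. (\<lambda>w. Suc l # w) ` (ts!l)"
  let ?B = "(\<lambda>w. Suc i # w) ` {v \<in> ts!i. lex_less v u}"
  have eq: "{v \<in> node ts. lex_less v (Suc i # u)} = insert [] (?A \<union> ?B)"
  proof (intro set_eqI iffI)
    fix v assume "v \<in> {v \<in> node ts. lex_less v (Suc i # u)}"
    then have v: "v \<in> node ts" "lex_less v (Suc i # u)" by auto
    show "v \<in> insert [] (?A \<union> ?B)"
      using node_cases[OF v(1)] v(2) by fastforce
  next
    fix v assume "v \<in> insert [] (?A \<union> ?B)"
    then show "v \<in> {v \<in> node ts. lex_less v (Suc i # u)}"
      using assms(2) by (auto simp: node_def)
  qed
  have fin: "\<forall>l\<in>{..<i}. finite ((\<lambda>w. Suc l # w) ` (ts!l))"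
    using assms by (auto simp: planar_tree_def)
  have disj: "\<forall>l\<in>{..<i}. \<forall>j\<in>{..<i}. l \<noteq> j \<longrightarrow>
      (\<lambda>w. Suc l # w) ` (ts!l) \<inter> (\<lambda>w. Suc j # w) ` (ts!j) = {}" by auto
  have "card ?A = (\<Sum>l<i. card ((\<lambda>w. Suc l # w) ` (ts!l)))"
    by (rule card_UN_disjoint[OF _ fin disj]) simp
  also have "\<dots> = (\<Sum>l<i. card (ts!l))"
    by (rule sum.cong) (auto simp: card_image inj_on_def)
  also have "\<dots> = sum_list (map card (take i ts))"
    using assms(2) by (simp add: sum_list_sum_nth atLeast0LessThan min_def)
  finally have cA: "card ?A = sum_list (map card (take i ts))" .
  have cB: "card ?B = pos (ts!i) u" unfolding pos_def by (rule card_image) (auto simp: inj_on_def)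
  have finA: "finite ?A" using fin by auto
  have finB: "finite ?B" using assms by (auto simp: planar_tree_def)
  have nin: "[] \<notin> ?A \<union> ?B" by blast
  have "card (insert [] (?A \<union> ?B)) = 1 + card (?A \<union> ?B)"
    using card_insert_disjoint[OF _ nin] finA finB by simp
  also have "card (?A \<union> ?B) = card ?A + card ?B"
    by (rule card_Un_disjoint[OF finA finB]) auto
  finally have "card (insert [] (?A \<union> ?B)) = 1 + (card ?A + card ?B)" .
  moreover have "pos (node ts) (Suc i # u) = card (insert [] (?A \<union> ?B))"
    by (simp only: pos_def eq)
  ultimately show ?thesis using cA cB by simp
qed

lemma lineage_Nil [simp]: "lineage T [] x = 0"
  by (simp add: lineage_def)

lemma lineage_node:
  assumes "\<forall>t\<in>set ts. planar_tree t" "i < length ts"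
  shows "lineage (node ts) (Suc i # u) (k, j) =
    lineage (ts!i) u (k, j) + (if k = length ts \<and> j = Suc i then 1 else 0)"
proof -
  let ?S = "{v. strict_prefix v u \<and> children (ts!i) v = k \<and> prefix (v @ [j]) u}"
  let ?E = "if k = length ts \<and> j = Suc i then {[]::nat list} else {}"
  have eq: "{v. strict_prefix v (Suc i # u) \<and> children (node ts) v = k \<and> prefix (v @ [j]) (Suc i # u)}
      = ?E \<union> (\<lambda>w. Suc i # w) ` ?S"
  proof (intro set_eqI iffI)
    fix v assume "v \<in> {v. strict_prefix v (Suc i # u) \<and> children (node ts) v = k \<and> prefix (v @ [j]) (Suc i # u)}"
    then show "v \<in> ?E \<union> (\<lambda>w. Suc i # w) ` ?S"
      using children_node_root[OF assms(1)] children_node_Cons[OF assms(2)]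
      by (cases v) auto
  next
    fix v assume "v \<in> ?E \<union> (\<lambda>w. Suc i # w) ` ?S"
    then show "v \<in> {v. strict_prefix v (Suc i # u) \<and> children (node ts) v = k \<and> prefix (v @ [j]) (Suc i # u)}"
      using children_node_root[OF assms(1)] children_node_Cons[OF assms(2)]
      by (auto split: if_splits)
  qed
  have finS: "finite ?S"
  proof (rule finite_subset)
    show "?S \<subseteq> set (prefixes u)" by (auto simp: strict_prefix_def)
  qed simp
  have "card (?E \<union> (\<lambda>w. Suc i # w) ` ?S) = card ?E + card ((\<lambda>w. Suc i # w) ` ?S)"
    by (rule card_Un_disjoint) (use finS in auto)
  also have "card ((\<lambda>w. Suc i # w) ` ?S) = card ?S" by (rule card_image) (auto simp: inj_on_def)
  finally show ?thesis unfolding lineage_def using eq by simp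
qed

definition LS :: "nat \<Rightarrow> int \<Rightarrow> nat list set list set" where
  "LS k s = {ts. length ts = k \<and> (\<forall>T\<in>set ts. planar_tree T) \<and> int (\<Sum>T\<leftarrow>ts. card T) = s}"

lemma F_def': "forest_size_prob \<mu> k s = (\<Sum>ts\<in>LS k s. prod_list (map (gw_weight \<mu>) ts))"
  unfolding forest_size_prob_def LS_def by simp

lemma card_planar_ge1: "planar_tree T \<Longrightarrow> 1 \<le> card T"
  using planar_nonempty planar_finite by (metis card_0_eq empty_iff less_one not_le)

lemma finite_planar_le: "finite {T. planar_tree T \<and> card T \<le> N}"
proof -
  let ?W = "{w. set w \<subseteq> {1..N} \<and> length w \<le> N}"
  have finW: "finite ?W" by (rule finite_lists_length_le) simp
  have "{T. planar_tree T \<and> card T \<le> N} \<subseteq> Pow ?W"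
  proof
    fix T assume "T \<in> {T. planar_tree T \<and> card T \<le> N}"
    then have T: "planar_tree T" "card T \<le> N" by auto
    have fT: "finite T" using T(1) planar_finite by blast
    show "T \<in> Pow ?W"
    proof (rule PowI, rule subsetI)
      fix w assume w: "w \<in> T"
      have sub1: "(\<lambda>k. take k w) ` {0..length w} \<subseteq> T"
      proof
        fix v assume "v \<in> (\<lambda>k. take k w) ` {0..length w}"
        then obtain k where "v = take k w" by blast
        then show "v \<in> T" using planar_prefix[OF T(1), of "take k w" "drop k w"] w by simp
      qed
      have c1: "card ((\<lambda>k. take k w) ` {0..length w}) = Suc (length w)"
      proof -
        have "inj_on (\<lambda>k. take k w) {0..length w}"
        proof (rule inj_onI)
          fix x y assume xy: "x \<in> {0..length w}" "y \<in> {0..length w}" "take x w = take y w"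
          then have "length (take x w) = length (take y w)" by simp
          then show "x = y" using xy(1,2) by simp
        qed
        then show ?thesis by (simp add: card_image)
      qed
      have "Suc (length w) \<le> card T" using card_mono[OF fT sub1] c1 by simp
      then have len: "length w \<le> N" using T(2) by simp
      have "set w \<subseteq> {1..N}"
      proof
        fix x assume "x \<in> set w"
        then obtain p q where pq: "w = p @ x # q" by (metis split_list)
        have px: "p @ [x] \<in> T" using planar_prefix[OF T(1), of "p @ [x]" q] w pq by simp
        have cl: "\<forall>j. 1 \<le> j \<and> j \<le> x \<longrightarrow> p @ [j] \<in> T"
          using px T(1) unfolding planar_tree_def by blast
        have sub2: "(\<lambda>j. p @ [j]) ` {1..x} \<subseteq> T" using cl by auto
        have c2: "card ((\<lambda>j. p @ [j]) ` {1..x}) = x"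
          by (subst card_image) (auto simp: inj_on_def)
        have "x \<le> card T" using card_mono[OF fT sub2] c2 by simp
        moreover have "1 \<le> x" using T(1) w \<open>x \<in> set w\<close> unfolding planar_tree_def by auto
        ultimately show "x \<in> {1..N}" using T(2) by simp
      qed
      then show "w \<in> ?W" using len by simp
    qed
  qed
  then show ?thesis using finW by (meson finite_Pow_iff finite_subset)
qed

lemma finite_LS: "finite (LS k s)"
proof (rule finite_subset)
  let ?P = "{T. planar_tree T \<and> card T \<le> nat s}"
  show "LS k s \<subseteq> {ts. set ts \<subseteq> ?P \<and> length ts = k}"
  proof
    fix ts assume "ts \<in> LS k s"
    then have ts: "length ts = k" "\<forall>T\<in>set ts. planar_tree T" "int (sum_list (map card ts)) = s"
      by (auto simp: LS_def)
    have "\<forall>T\<in>set ts. card T \<le> sum_list (map card ts)"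
      by (simp add: member_le_sum_list)
    then show "ts \<in> {ts. set ts \<subseteq> ?P \<and> length ts = k}" using ts by auto
  qed
  show "finite {ts. set ts \<subseteq> ?P \<and> length ts = k}"
    by (rule finite_lists_length_eq) (rule finite_planar_le)
qed

lemma F_neg: "s < 0 \<Longrightarrow> forest_size_prob \<mu> k s = 0"
  unfolding F_def' LS_def by (auto intro!: sum.neutral)

lemma F_zero_len: "forest_size_prob \<mu> 0 s = (if s = 0 then 1 else 0)"
proof -
  have "LS 0 s = (if s = 0 then {[]} else {})" by (auto simp: LS_def)
  then show ?thesis unfolding F_def' by simp
qed

lemma F_zero_size: assumes "1 \<le> k" shows "forest_size_prob \<mu> k 0 = 0"
proof -
  have "LS k 0 = {}"
  proof (rule ccontr)
    assume "LS k 0 \<noteq> {}"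
    then obtain ts where ts: "length ts = k" "\<forall>T\<in>set ts. planar_tree T" "sum_list (map card ts) = 0"
      by (auto simp: LS_def)
    obtain T ts' where "ts = T # ts'" using ts(1) assms by (cases ts) auto
    then show False using ts card_planar_ge1[of T] by auto
  qed
  then show ?thesis unfolding F_def' by simp
qed

lemma F_one: "forest_size_prob \<mu> 1 (int N) = gw_size_prob \<mu> N"
proof -
  have "LS 1 (int N) = (\<lambda>T. [T]) ` {T. planar_tree T \<and> card T = N}"
    by (auto simp: LS_def length_Suc_conv)
  then show ?thesis unfolding F_def' gw_size_prob_def
    by (simp add: sum.reindex inj_on_def)
qed

lemma F_conv_nat:
  "forest_size_prob \<mu> (p + q) (int s) =
    (\<Sum>x\<le>s. forest_size_prob \<mu> p (int x) * forest_size_prob \<mu> q (int (s - x)))"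
proof -
  let ?w = "\<lambda>ts. prod_list (map (gw_weight \<mu>) ts)"
  let ?Sig = "SIGMA x:{..s}. LS p (int x) \<times> LS q (int (s - x))"
  have "(\<Sum>x\<le>s. forest_size_prob \<mu> p (int x) * forest_size_prob \<mu> q (int (s - x)))
      = (\<Sum>x\<le>s. \<Sum>lr\<in>LS p (int x) \<times> LS q (int (s - x)). ?w (fst lr) * ?w (snd lr))"
    unfolding F_def' by (simp add: sum_product sum.cartesian_product case_prod_beta)
  also have "\<dots> = (\<Sum>z\<in>?Sig. ?w (fst (snd z)) * ?w (snd (snd z)))"
    by (subst sum.Sigma) (auto simp: finite_LS case_prod_beta)
  also have "\<dots> = (\<Sum>ts\<in>LS (p + q) (int s). ?w ts)"
  proof (rule sum.reindex_bij_witness[where j = "\<lambda>z. fst (snd z) @ snd (snd z)"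
        and i = "\<lambda>ts. (sum_list (map card (take p ts)), take p ts, drop p ts)"])
    fix z assume "z \<in> ?Sig"
    then obtain x l r where z: "z = (x, l, r)" "x \<le> s" "l \<in> LS p (int x)" "r \<in> LS q (int (s - x))"
      by auto
    then show "(sum_list (map card (take p (fst (snd z) @ snd (snd z)))),
        take p (fst (snd z) @ snd (snd z)), drop p (fst (snd z) @ snd (snd z))) = z"
      by (auto simp: LS_def)
    show "fst (snd z) @ snd (snd z) \<in> LS (p + q) (int s)" using z by (auto simp: LS_def)
    show "?w (fst (snd z) @ snd (snd z)) = ?w (fst (snd z)) * ?w (snd (snd z))" by simp
  next
    fix ts assume ts: "ts \<in> LS (p + q) (int s)"
    then have A: "length ts = p + q" "\<forall>T\<in>set ts. planar_tree T" "sum_list (map card ts) = s"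
      by (auto simp: LS_def)
    show "fst (snd (sum_list (map card (take p ts)), take p ts, drop p ts)) @
          snd (snd (sum_list (map card (take p ts)), take p ts, drop p ts)) = ts" by simp
    have "sum_list (map card ts) = sum_list (map card (take p ts)) + sum_list (map card (drop p ts))"
      by (metis append_take_drop_id map_append sum_list_append)
    then show "(sum_list (map card (take p ts)), take p ts, drop p ts) \<in> ?Sig"
      using A by (auto simp: LS_def dest: in_set_takeD in_set_dropD)
  qed
  finally show ?thesis unfolding F_def' by simp
qed

lemma F_conv:
  assumes "s \<le> int N"
  shows "forest_size_prob \<mu> (p + q) s =
    (\<Sum>x\<le>N. forest_size_prob \<mu> p (int x) * forest_size_prob \<mu> q (s - int x))"
proof (cases "s < 0")
  case True then show ?thesis by (simp add: F_neg)
next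
  case False
  then obtain s' where s': "s = int s'" by (metis nonneg_int_cases not_less)
  have "forest_size_prob \<mu> (p + q) s =
     (\<Sum>x\<le>s'. forest_size_prob \<mu> p (int x) * forest_size_prob \<mu> q (s - int x))"
    unfolding s' F_conv_nat by (intro sum.cong) (auto simp: of_nat_diff)
  also have "\<dots> = (\<Sum>x\<le>N. forest_size_prob \<mu> p (int x) * forest_size_prob \<mu> q (s - int x))"
    by (rule sum.mono_neutral_left) (use assms s' in \<open>auto simp: F_neg\<close>)
  finally show ?thesis .
qed

lemma finite_IK: "finite (IK K)"
proof (rule finite_subset)
  show "IK K \<subseteq> {0..K} \<times> {0..K}" by (auto simp: IK_def)
qed simp

lemma Qh_rec:
  assumes h: "sum a (IK K) = h" "0 < h"
  shows "Qh \<mu> K h a =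
    (\<Sum>x\<in>IK K. if 1 \<le> a x then \<mu> (fst x) * Qh \<mu> K (h - 1) (a(x := a x - 1)) else 0)"
proof -
  define D where "D b = (\<Prod>i\<in>IK K. (fact (b i) :: real))" for b :: "nat \<times> nat \<Rightarrow> nat"
  define P where "P b = (\<Prod>i\<in>IK K. \<mu> (fst i) ^ b i)" for b :: "nat \<times> nat \<Rightarrow> nat"
  have QD: "Qh \<mu> K g b = fact g / D b * P b" for g b
    unfolding Qh_def D_def P_def by (simp add: case_prod_beta)
  have Dpos: "D b > 0" for b unfolding D_def by (intro prod_pos) auto
  have tm: "(if 1 \<le> a x then \<mu> (fst x) * Qh \<mu> K (h - 1) (a(x := a x - 1)) else 0)
      = fact (h - 1) * real (a x) / D a * P a" if x: "x \<in> IK K" for x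
  proof (cases "1 \<le> a x")
    case False then show ?thesis by simp
  next
    case True
    let ?a' = "a(x := a x - 1)"
    have D1: "D a = fact (a x) * (\<Prod>i\<in>IK K - {x}. fact (a i))"
      unfolding D_def by (rule prod.remove[OF finite_IK x])
    have D2: "D ?a' = fact (a x - 1) * (\<Prod>i\<in>IK K - {x}. fact (a i))"
      unfolding D_def by (subst prod.remove[OF finite_IK x]) (auto intro!: prod.cong)
    have P1: "P a = \<mu> (fst x) ^ a x * (\<Prod>i\<in>IK K - {x}. \<mu> (fst i) ^ a i)"
      unfolding P_def by (rule prod.remove[OF finite_IK x])
    have P2: "P ?a' = \<mu> (fst x) ^ (a x - 1) * (\<Prod>i\<in>IK K - {x}. \<mu> (fst i) ^ a i)"
      unfolding P_def by (subst prod.remove[OF finite_IK x]) (auto intro!: prod.cong)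
    obtain b where b: "a x = Suc b" using True by (cases "a x") auto
    have fa: "(fact (a x) :: real) = real (a x) * fact (a x - 1)"
      unfolding b by simp
    have pw: "\<mu> (fst x) ^ a x = \<mu> (fst x) * \<mu> (fst x) ^ (a x - 1)"
      unfolding b by simp
    have Dr: "(\<Prod>i\<in>IK K - {x}. (fact (a i) :: real)) > 0" by (intro prod_pos) auto
    have "\<mu> (fst x) * Qh \<mu> K (h - 1) ?a' = \<mu> (fst x) * (fact (h - 1) / D ?a' * P ?a')" by (simp add: QD)
    also have "\<dots> = fact (h - 1) * real (a x) / D a * P a"
      unfolding D1 D2 P1 P2 fa pw using Dr True
      by (simp add: field_simps)
    finally show ?thesis using True by simp
  qed
  have "(\<Sum>x\<in>IK K. if 1 \<le> a x then \<mu> (fst x) * Qh \<mu> K (h - 1) (a(x := a x - 1)) else 0)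
      = (\<Sum>x\<in>IK K. fact (h - 1) * real (a x) / D a * P a)"
    by (rule sum.cong[OF refl]) (rule tm)
  also have "\<dots> = fact (h - 1) * real h / D a * P a"
  proof -
    have hs: "(\<Sum>x\<in>IK K. real (a x)) = real h" using h(1) by (metis of_nat_sum)
    have "(\<Sum>x\<in>IK K. fact (h - 1) * real (a x) / D a * P a)
        = (\<Sum>x\<in>IK K. real (a x)) * (fact (h - 1) / D a * P a)"
      by (subst sum_distrib_right, rule sum.cong, simp_all add: divide_inverse mult_ac)
    then show ?thesis using hs by (simp add: divide_inverse mult_ac)
  qed
  also have "\<dots> = fact h / D a * P a"
  proof -
    obtain g where g: "h = Suc g" using h(2) by (cases h) auto
    show ?thesis unfolding g by (simp add: algebra_simps)
  qed
  finally show ?thesis by (simp add: QD)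
qed

lemma N1_rec:
  assumes "x \<in> IK K" "1 \<le> a x"
  shows "N1 K a = N1 K (a(x := a x - 1)) + (snd x - 1)"
proof -
  have "N1 K a = (snd x - 1) * a x + (\<Sum>y\<in>IK K - {x}. (snd y - 1) * a y)"
    unfolding N1_def by (simp add: case_prod_beta prod.remove sum.remove[OF finite_IK assms(1)])
  moreover have "N1 K (a(x := a x - 1)) = (snd x - 1) * (a x - 1) + (\<Sum>y\<in>IK K - {x}. (snd y - 1) * a y)"
    unfolding N1_def by (simp add: case_prod_beta sum.remove[OF finite_IK assms(1)])
  moreover have "(snd x - 1) * a x = (snd x - 1) * (a x - 1) + (snd x - 1)"
    using assms(2) by (cases "a x") auto
  ultimately show ?thesis by simp
qed

lemma N2_rec:
  assumes "x \<in> IK K" "1 \<le> a x"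
  shows "N2 K a = N2 K (a(x := a x - 1)) + (fst x - snd x)"
proof -
  have "N2 K a = (fst x - snd x) * a x + (\<Sum>y\<in>IK K - {x}. (fst y - snd y) * a y)"
    unfolding N2_def by (simp add: case_prod_beta sum.remove[OF finite_IK assms(1)])
  moreover have "N2 K (a(x := a x - 1)) = (fst x - snd x) * (a x - 1) + (\<Sum>y\<in>IK K - {x}. (fst y - snd y) * a y)"
    unfolding N2_def by (simp add: case_prod_beta sum.remove[OF finite_IK assms(1)])
  moreover have "(fst x - snd x) * a x = (fst x - snd x) * (a x - 1) + (fst x - snd x)"
    using assms(2) by (cases "a x") auto
  ultimately show ?thesis by simp
qed

definition Mset :: "nat \<Rightarrow> (nat \<times> nat \<Rightarrow> nat) \<Rightarrow> nat \<Rightarrow> nat \<Rightarrow> nat list set set" where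
  "Mset K a m r = {T. planar_tree T \<and> card T = m + 1 + r \<and>
     (\<exists>u\<in>T. pos T u = m \<and> (\<forall>x\<in>IK K. lineage T u x = a x))}"

definition M2set :: "nat \<Rightarrow> nat \<times> nat \<Rightarrow> (nat \<times> nat \<Rightarrow> nat) \<Rightarrow> nat \<Rightarrow> nat \<Rightarrow> nat list set set" where
  "M2set K x a m r = {t. planar_tree t \<and> card t = m + 1 + r \<and>
     (\<exists>u\<in>t. pos t u = m \<and> (\<forall>y\<in>IK K. lineage t u y + (if y = x then 1 else 0) = a y))}"

lemma finite_Mset: "finite (Mset K a m r)"
  by (rule finite_subset[OF _ finite_planar_le[of "m + 1 + r"]]) (auto simp: Mset_def)

lemma finite_M2set: "finite (M2set K x a m r)"
  by (rule finite_subset[OF _ finite_planar_le[of "m + 1 + r"]]) (auto simp: M2set_def)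

lemma sum_triple:
  fixes f g h :: "_ \<Rightarrow> real"
  shows "sum f A * sum g B * sum h C = (\<Sum>p\<in>A \<times> (B \<times> C). f (fst p) * (g (fst (snd p)) * h (snd (snd p))))"
proof -
  have "sum f A * sum g B * sum h C = sum f A * (sum g B * sum h C)" by (simp add: mult.assoc)
  also have "\<dots> = (\<Sum>a\<in>A. \<Sum>q\<in>B \<times> C. f a * (g (fst q) * h (snd q)))"
    by (simp add: sum_product sum.cartesian_product case_prod_beta)
  also have "\<dots> = (\<Sum>p\<in>A \<times> (B \<times> C). f (fst p) * (g (fst (snd p)) * h (snd (snd p))))"
    by (simp add: sum.cartesian_product case_prod_beta)
  finally show ?thesis .
qed

lemma weight_root_zero:
  assumes "planar_tree T" "\<mu> (children T []) = 0"
  shows "gw_weight \<mu> T = 0"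
proof -
  have "gw_weight \<mu> T = \<mu> (children T []) * (\<Prod>u\<in>T - {[]}. \<mu> (children T u))"
    unfolding gw_weight_def using planar_finite[OF assms(1)] planar_nonempty[OF assms(1)]
    by (rule prod.remove)
  then show ?thesis using assms(2) by simp
qed

lemma decomp:
  assumes muK: "\<forall>k>K. \<mu> k = 0" and m1: "1 \<le> m"
  shows "(\<Sum>T\<in>Mset K a m r. gw_weight \<mu> T) =
    (\<Sum>x\<in>IK K. \<mu> (fst x) * (\<Sum>sl<m. \<Sum>sr\<le>r.
        forest_size_prob \<mu> (snd x - 1) (int sl) *
        (\<Sum>t\<in>M2set K x a (m - 1 - sl) (r - sr). gw_weight \<mu> t) *
        forest_size_prob \<mu> (fst x - snd x) (int sr)))"
proof -
  let ?w = "gw_weight \<mu>"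
  let ?W = "\<lambda>ts. prod_list (map (gw_weight \<mu>) ts)"
  define Z where "Z = (SIGMA x:IK K. SIGMA sl:{..<m}. SIGMA sr:{..r}.
      LS (snd x - 1) (int sl) \<times> (M2set K x a (m - 1 - sl) (r - sr) \<times> LS (fst x - snd x) (int sr)))"
  define g where "g z = \<mu> (fst (fst z)) * (?W (fst (snd (snd (snd z)))) *
      (?w (fst (snd (snd (snd (snd z))))) * ?W (snd (snd (snd (snd (snd z)))))))" for z :: "(nat \<times> nat) \<times> nat \<times> nat \<times> nat list set list \<times> nat list set \<times> nat list set list"
  define \<phi> where "\<phi> z = node (fst (snd (snd (snd z))) @ fst (snd (snd (snd (snd z)))) # snd (snd (snd (snd (snd z)))))" for z :: "(nat \<times> nat) \<times> nat \<times> nat \<times> nat list set list \<times> nat list set \<times> nat list set list"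
  let ?M = "{T \<in> Mset K a m r. children T [] \<le> K}"
  have R: "(\<Sum>x\<in>IK K. \<mu> (fst x) * (\<Sum>sl<m. \<Sum>sr\<le>r.
        forest_size_prob \<mu> (snd x - 1) (int sl) *
        (\<Sum>t\<in>M2set K x a (m - 1 - sl) (r - sr). gw_weight \<mu> t) *
        forest_size_prob \<mu> (fst x - snd x) (int sr))) = (\<Sum>z\<in>Z. g z)"
  proof -
    have "(\<Sum>x\<in>IK K. \<mu> (fst x) * (\<Sum>sl<m. \<Sum>sr\<le>r.
        forest_size_prob \<mu> (snd x - 1) (int sl) *
        (\<Sum>t\<in>M2set K x a (m - 1 - sl) (r - sr). gw_weight \<mu> t) *
        forest_size_prob \<mu> (fst x - snd x) (int sr))) =
      (\<Sum>x\<in>IK K. \<Sum>sl<m. \<Sum>sr\<le>r. \<Sum>p\<in>LS (snd x - 1) (int sl) \<times>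
          (M2set K x a (m - 1 - sl) (r - sr) \<times> LS (fst x - snd x) (int sr)).
          g (x, sl, sr, p))"
      unfolding F_def' sum_triple g_def by (simp add: sum_distrib_left)
    also have "\<dots> = (\<Sum>z\<in>Z. g z)"
      unfolding Z_def
      by (simp add: sum.Sigma finite_IK finite_LS finite_M2set split_beta)
    finally show ?thesis .
  qed
  have L: "(\<Sum>T\<in>Mset K a m r. ?w T) = (\<Sum>T\<in>?M. ?w T)"
  proof (rule sum.mono_neutral_right[OF finite_Mset])
    show "?M \<subseteq> Mset K a m r" by blast
    show "\<forall>T\<in>Mset K a m r - ?M. ?w T = 0"
    proof
      fix T assume "T \<in> Mset K a m r - ?M"
      then have "planar_tree T" "K < children T []" by (auto simp: Mset_def)
      then show "?w T = 0" using muK weight_root_zero by blast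
    qed
  qed
  have Zmem: "\<phi> z \<in> ?M \<and> ?w (\<phi> z) = g z \<and>
      (\<exists>u'. pos (\<phi> z) (snd (fst z) # u') = m \<and> snd (fst z) # u' \<in> \<phi> z) \<and>
      length (fst (snd (snd (snd z)))) = snd (fst z) - 1 \<and> 1 \<le> snd (fst z) \<and>
      (\<forall>t\<in>set (fst (snd (snd (snd z))) @ fst (snd (snd (snd (snd z)))) # snd (snd (snd (snd (snd z))))).
          planar_tree t)"
    if z: "z \<in> Z" for z
  proof -
    obtain c j sl sr l t rr where zz: "z = ((c, j), sl, sr, l, t, rr)" by (metis prod.collapse)
    have x: "1 \<le> j" "j \<le> c" "c \<le> K" and sl: "sl < m" and sr: "sr \<le> r"
      and l: "length l = j - 1" "\<forall>T\<in>set l. planar_tree T" "sum_list (map card l) = sl"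
      and rr: "length rr = c - j" "\<forall>T\<in>set rr. planar_tree T" "sum_list (map card rr) = sr"
      and t: "t \<in> M2set K (c, j) a (m - 1 - sl) (r - sr)"
      using z unfolding zz Z_def by (auto simp: IK_def LS_def)
    from t obtain u' where t': "planar_tree t" "card t = (m - 1 - sl) + 1 + (r - sr)"
      "u' \<in> t" "pos t u' = m - 1 - sl"
      "\<forall>y\<in>IK K. lineage t u' y + (if y = (c, j) then 1 else 0) = a y"
      unfolding M2set_def by blast
    let ?ts = "l @ t # rr"
    have pl: "\<forall>T\<in>set ?ts. planar_tree T" using l rr t' by auto
    have len: "length ?ts = c" using l rr x by simp
    have il: "j - 1 < length ?ts" using len x by simp
    have nth: "?ts ! (j - 1) = t" using l by (simp add: nth_append)
    have tk: "take (j - 1) ?ts = l" using l by simp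
    have phi: "\<phi> z = node ?ts" unfolding \<phi>_def zz by simp
    have Sj: "Suc (j - 1) = j" using x by simp
    have card: "card (\<phi> z) = m + 1 + r"
      unfolding phi card_node[OF pl] using l rr t' sl sr by simp
    have uin: "j # u' \<in> \<phi> z" using Cons_in_node[OF il, of u'] nth t' Sj phi by simp
    have posu: "pos (\<phi> z) (j # u') = m"
      using pos_node[OF pl il, of u'] nth tk t' sl l Sj phi by simp
    have lin: "\<forall>y\<in>IK K. lineage (\<phi> z) (j # u') y = a y"
    proof
      fix y assume y: "y \<in> IK K"
      obtain k j' where yy: "y = (k, j')" by (metis prod.collapse)
      show "lineage (\<phi> z) (j # u') y = a y"
        using lineage_node[OF pl il, of u' k j'] t'(5) y nth len Sj phi yy by auto
    qed
    have ch: "children (\<phi> z) [] \<le> K" using children_node_root[OF pl] len x phi by simp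
    have inM: "\<phi> z \<in> ?M"
      unfolding Mset_def using planar_node[OF pl] phi card uin posu lin ch by auto
    have "?w (\<phi> z) = \<mu> c * ?W ?ts"
      unfolding phi weight_node[OF pl] len ..
    also have "\<dots> = g z" unfolding g_def zz by simp
    finally have wt: "?w (\<phi> z) = g z" .
    show ?thesis using inM wt uin posu l(1) x(1) pl zz by auto
  qed
  have bij: "bij_betw \<phi> Z ?M"
  proof (rule bij_betw_imageI)
    show "inj_on \<phi> Z"
    proof (rule inj_onI)
      fix z1 z2 assume z1: "z1 \<in> Z" and z2: "z2 \<in> Z" and eq: "\<phi> z1 = \<phi> z2"
      obtain c1 j1 sl1 sr1 l1 t1 rr1 where zz1: "z1 = ((c1, j1), sl1, sr1, l1, t1, rr1)" by (metis prod.collapse)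
      obtain c2 j2 sl2 sr2 l2 t2 rr2 where zz2: "z2 = ((c2, j2), sl2, sr2, l2, t2, rr2)" by (metis prod.collapse)
      have A1: "l1 \<in> LS (j1 - 1) (int sl1)" "rr1 \<in> LS (c1 - j1) (int sr1)" "j1 \<le> c1"
        using z1 unfolding zz1 Z_def by (auto simp: IK_def)
      have A2: "l2 \<in> LS (j2 - 1) (int sl2)" "rr2 \<in> LS (c2 - j2) (int sr2)" "j2 \<le> c2"
        using z2 unfolding zz2 Z_def by (auto simp: IK_def)
      from Zmem[OF z1] obtain u1 where u1: "pos (\<phi> z1) (j1 # u1) = m" "j1 # u1 \<in> \<phi> z1"
        and len1: "length l1 = j1 - 1" "1 \<le> j1" and pl1: "\<forall>t\<in>set (l1 @ t1 # rr1). planar_tree t"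
        and M1: "\<phi> z1 \<in> ?M" unfolding zz1 by auto
      from Zmem[OF z2] obtain u2 where u2: "pos (\<phi> z2) (j2 # u2) = m" "j2 # u2 \<in> \<phi> z2"
        and len2: "length l2 = j2 - 1" "1 \<le> j2" and pl2: "\<forall>t\<in>set (l2 @ t2 # rr2). planar_tree t"
        unfolding zz2 by auto
      have fin: "finite (\<phi> z1)" using M1 planar_finite by (auto simp: Mset_def)
      have "j1 # u1 = j2 # u2" using pos_inj[OF fin u1(2)] u1(1) u2 eq by simp
      then have jj: "j1 = j2" by simp
      have tseq: "l1 @ t1 # rr1 = l2 @ t2 # rr2"
        using node_inj[OF pl1 pl2] eq unfolding \<phi>_def zz1 zz2 by simp
      then have "l1 = l2" "t1 = t2" "rr1 = rr2" using len1 len2 jj by (auto simp: append_eq_append_conv)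
      moreover have "c1 = c2" using tseq A1 A2 jj len1 len2 \<open>rr1 = rr2\<close> by (auto simp: LS_def)
      moreover have "sl1 = sl2" "sr1 = sr2" using A1 A2 \<open>l1 = l2\<close> \<open>rr1 = rr2\<close> by (auto simp: LS_def)
      ultimately show "z1 = z2" unfolding zz1 zz2 using jj by simp
    qed
    show "\<phi> ` Z = ?M"
    proof
      show "\<phi> ` Z \<subseteq> ?M" using Zmem by blast
      show "?M \<subseteq> \<phi> ` Z"
      proof
        fix T assume TM: "T \<in> ?M"
        then have T: "planar_tree T" "card T = m + 1 + r" "children T [] \<le> K"
          and ex: "\<exists>u\<in>T. pos T u = m \<and> (\<forall>x\<in>IK K. lineage T u x = a x)"
          by (auto simp: Mset_def)
        from ex obtain u where u: "u \<in> T" "pos T u = m" "\<forall>x\<in>IK K. lineage T u x = a x" by blast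
        define c where "c = children T []"
        define ts where "ts = map (sub T) [0..<c]"
        have Tn: "T = node ts" unfolding ts_def c_def by (rule planar_decomp(1)[OF T(1)])
        have pl: "\<forall>t\<in>set ts. planar_tree t" using planar_decomp(2)[OF T(1)] unfolding ts_def c_def by auto
        have len: "length ts = c" unfolding ts_def by simp
        have "u \<noteq> []" using u(2) m1 by auto
        then obtain i u' where iu: "i < length ts" "u' \<in> ts ! i" "u = Suc i # u'"
          using node_cases[of u ts] u(1) Tn by auto
        define l where "l = take i ts"
        define t where "t = ts ! i"
        define rr where "rr = drop (Suc i) ts"
        define sl where "sl = sum_list (map card l)"
        define sr where "sr = sum_list (map card rr)"
        have tsd: "ts = l @ t # rr" unfolding l_def t_def rr_def using iu(1) by (simp add: id_take_nth_drop)
        have plt: "planar_tree t" using pl iu(1) unfolding t_def by simp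
        have pm: "m = 1 + sl + pos t u'"
          using pos_node[OF pl iu(1), of u'] u(2) Tn iu(3) unfolding sl_def l_def t_def by simp
        have cs: "m + 1 + r = 1 + (sl + (card t + sr))"
          using card_node[OF pl] T(2) Tn unfolding sl_def sr_def by (simp add: tsd)
        have pt: "pos t u' < card t" using pos_lt_card[OF planar_finite[OF plt]] iu(2) unfolding t_def by simp
        have slm: "sl < m" using pm by simp
        have srr: "sr \<le> r" using pm cs pt by simp
        have x: "(c, Suc i) \<in> IK K" using iu(1) len T(3) unfolding c_def by (auto simp: IK_def)
        have tM2: "t \<in> M2set K (c, Suc i) a (m - 1 - sl) (r - sr)"
          unfolding M2set_def
        proof (intro CollectI conjI bexI)
          show "planar_tree t" by (rule plt)
          show "card t = m - 1 - sl + 1 + (r - sr)" using pm cs srr by simp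
          show "u' \<in> t" using iu(2) unfolding t_def .
          show "pos t u' = m - 1 - sl" using pm by simp
          show "\<forall>y\<in>IK K. lineage t u' y + (if y = (c, Suc i) then 1 else 0) = a y"
          proof
            fix y assume y: "y \<in> IK K"
            obtain k j' where yy: "y = (k, j')" by (metis prod.collapse)
            show "lineage t u' y + (if y = (c, Suc i) then 1 else 0) = a y"
              using lineage_node[OF pl iu(1), of u' k j'] u(3) y Tn iu(3) len yy
              unfolding t_def by auto
          qed
        qed
        have lL: "l \<in> LS (snd (c, Suc i) - 1) (int sl)"
          using pl iu(1) unfolding LS_def l_def sl_def by (auto dest: in_set_takeD)
        have rL: "rr \<in> LS (fst (c, Suc i) - snd (c, Suc i)) (int sr)"
          using pl iu(1) len unfolding LS_def rr_def sr_def by (auto dest: in_set_dropD)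
        have zZ: "((c, Suc i), sl, sr, l, t, rr) \<in> Z"
          unfolding Z_def using x slm srr lL tM2 rL by auto
        have "\<phi> ((c, Suc i), sl, sr, l, t, rr) = T" unfolding \<phi>_def using Tn tsd by simp
        then show "T \<in> \<phi> ` Z" using zZ by (metis image_eqI)
      qed
    qed
  qed
  have "(\<Sum>T\<in>?M. ?w T) = (\<Sum>z\<in>Z. ?w (\<phi> z))"
    by (rule sum.reindex_bij_betw[OF bij, symmetric])
  also have "\<dots> = (\<Sum>z\<in>Z. g z)" by (rule sum.cong) (use Zmem in auto)
  finally show ?thesis using L R by simp
qed

lemma M2_eq:
  assumes "x \<in> IK K"
  shows "M2set K x a m r = (if 1 \<le> a x then Mset K (a(x := a x - 1)) m r else {})"
proof (cases "1 \<le> a x")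
  case False
  then have "M2set K x a m r = {}" using assms unfolding M2set_def by fastforce
  then show ?thesis using False by simp
next
  case True
  have "(\<forall>y\<in>IK K. lin y + (if y = x then 1 else 0) = a y) \<longleftrightarrow>
        (\<forall>y\<in>IK K. lin y = (a(x := a x - 1)) y)" for lin :: "nat \<times> nat \<Rightarrow> nat"
  proof (intro iffI ballI)
    fix y assume H: "\<forall>y\<in>IK K. lin y + (if y = x then 1 else 0) = a y" and y: "y \<in> IK K"
    then show "lin y = (a(x := a x - 1)) y" by (cases "y = x") auto
  next
    fix y assume H: "\<forall>y\<in>IK K. lin y = (a(x := a x - 1)) y" and y: "y \<in> IK K"
    then show "lin y + (if y = x then 1 else 0) = a y" using True by (cases "y = x") auto
  qed
  then show ?thesis using True unfolding M2set_def Mset_def by simp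
qed

lemma Mset_zero:
  "Mset K a 0 r = (if \<forall>x\<in>IK K. a x = 0 then {T. planar_tree T \<and> card T = r + 1} else {})"
proof -
  have "(\<exists>u\<in>T. pos T u = 0 \<and> (\<forall>x\<in>IK K. lineage T u x = a x)) \<longleftrightarrow> (\<forall>x\<in>IK K. a x = 0)"
    if "planar_tree T" for T
  proof
    assume "\<exists>u\<in>T. pos T u = 0 \<and> (\<forall>x\<in>IK K. lineage T u x = a x)"
    then obtain u where u: "u \<in> T" "pos T u = 0" "\<forall>x\<in>IK K. lineage T u x = a x" by blast
    have "u = []" using pos_ge1[OF that, of u] u(2) by (cases "u = []") auto
    then show "\<forall>x\<in>IK K. a x = 0" using u(3) by simp
  next
    assume "\<forall>x\<in>IK K. a x = 0"
    then show "\<exists>u\<in>T. pos T u = 0 \<and> (\<forall>x\<in>IK K. lineage T u x = a x)"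
      using planar_nonempty[OF that] by (intro bexI[of _ "[]"]) auto
  qed
  then have "T \<in> Mset K a 0 r \<longleftrightarrow> planar_tree T \<and> card T = r + 1 \<and> (\<forall>x\<in>IK K. a x = 0)" for T
    unfolding Mset_def by (cases "planar_tree T") auto
  then show ?thesis by auto
qed

lemma dsum_factor:
  fixes Q :: real
  shows "(\<Sum>i\<in>A. \<Sum>j\<in>B. Q * (f i * g j)) = Q * (sum f A * sum g B)"
proof -
  have "Q * (sum f A * sum g B) = Q * (\<Sum>i\<in>A. \<Sum>j\<in>B. f i * g j)" by (simp only: sum_product)
  also have "\<dots> = (\<Sum>i\<in>A. \<Sum>j\<in>B. Q * (f i * g j))" by (simp only: sum_distrib_left)
  finally show ?thesis by simp
qed

lemma main:
  assumes muK: "\<forall>k>K. \<mu> k = 0"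
  shows "sum a (IK K) = h \<Longrightarrow> (\<Sum>T\<in>Mset K a m r. gw_weight \<mu> T) =
    Qh \<mu> K h a * (forest_size_prob \<mu> (N1 K a) (int m - int h) *
                   forest_size_prob \<mu> (1 + N2 K a) (int r + 1))"
proof (induction h arbitrary: a m r)
  have base: "(\<Sum>T\<in>Mset K a 0 r. gw_weight \<mu> T) =
    Qh \<mu> K h a * (forest_size_prob \<mu> (N1 K a) (int 0 - int h) *
                   forest_size_prob \<mu> (1 + N2 K a) (int r + 1))"
    if ah: "sum a (IK K) = h" for a h r
  proof (cases "\<forall>x\<in>IK K. a x = 0")
    case True
    then have h0: "h = 0" using ah by simp
    have p1: "(\<Prod>(k, j)\<in>IK K. \<mu> k ^ a (k, j)) = 1" by (rule prod.neutral) (use True in auto)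
    have p2: "(\<Prod>i\<in>IK K. fact (a i) :: real) = 1" by (rule prod.neutral) (use True in auto)
    have Q: "Qh \<mu> K h a = 1" unfolding Qh_def h0 p1 p2 by simp
    have n1: "N1 K a = 0" unfolding N1_def using True by (auto intro!: sum.neutral)
    have n2: "N2 K a = 0" unfolding N2_def using True by (auto intro!: sum.neutral)
    have "forest_size_prob \<mu> 1 (int r + 1) = gw_size_prob \<mu> (r + 1)"
      using F_one[of \<mu> "r + 1"] by (simp add: add.commute)
    then show ?thesis using True Mset_zero[of K a r] Q n1 n2 h0
      by (simp add: F_zero_len gw_size_prob_def)
  next
    case False
    then have "h \<noteq> 0" using ah sum_eq_0_iff[OF finite_IK[of K], of a] by auto
    then have "int 0 - int h < 0" by simp
    moreover have "Mset K a 0 r = {}" using False Mset_zero[of K a r] by presburger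
    ultimately show ?thesis by (simp add: F_neg)
  qed
  {
    case 0
    show ?case
    proof (cases "m = 0")
      case True then show ?thesis using base[OF 0] by simp
    next
      case False
      have az: "\<forall>x\<in>IK K. a x = 0" using 0 sum_eq_0_iff[OF finite_IK[of K], of a] by simp
      have "M2set K x a m' r' = {}" if "x \<in> IK K" for x m' r'
        using M2_eq[OF that] az that by simp
      then have "(\<Sum>T\<in>Mset K a m r. gw_weight \<mu> T) = 0"
        using decomp[OF muK, where m=m and a=a and r=r] False by simp
      moreover have "N1 K a = 0" unfolding N1_def using az by (auto intro!: sum.neutral)
      ultimately show ?thesis using False by (simp add: F_zero_len)
    qed
  next
    case (Suc h)
    show ?case
    proof (cases "m = 0")
      case True then show ?thesis using base[OF Suc.prems] by simp
    next
      case False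
      let ?F = "forest_size_prob \<mu>"
      let ?FF = "?F (N1 K a) (int m - int (Suc h)) * ?F (1 + N2 K a) (int r + 1)"
      have inner: "\<mu> (fst x) * (\<Sum>sl<m. \<Sum>sr\<le>r. ?F (snd x - 1) (int sl) *
            (\<Sum>t\<in>M2set K x a (m - 1 - sl) (r - sr). gw_weight \<mu> t) * ?F (fst x - snd x) (int sr))
          = (if 1 \<le> a x then \<mu> (fst x) * Qh \<mu> K h (a(x := a x - 1)) else 0) * ?FF"
        if x: "x \<in> IK K" for x
      proof (cases "1 \<le> a x")
        case False then show ?thesis using M2_eq[OF x] by simp
      next
        case True
        let ?a = "a(x := a x - 1)"
        have sa: "sum ?a (IK K) = h"
        proof -
          have "sum a (IK K) = a x + sum a (IK K - {x})" by (rule sum.remove[OF finite_IK x])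
          moreover have "sum ?a (IK K) = (a x - 1) + sum a (IK K - {x})"
            by (subst sum.remove[OF finite_IK x]) (auto intro!: sum.cong)
          ultimately show ?thesis using Suc.prems True by simp
        qed
        let ?Q = "Qh \<mu> K h ?a"
        let ?A = "\<lambda>sl::nat. ?F (N1 K ?a) (int m - int (Suc h) - int sl)"
        let ?B = "\<lambda>sr::nat. ?F (1 + N2 K ?a) (int r + 1 - int sr)"
        have S2: "(\<Sum>t\<in>M2set K x a (m - 1 - sl) (r - sr). gw_weight \<mu> t) = ?Q * (?A sl * ?B sr)"
          if "sl < m" "sr \<le> r" for sl sr
        proof -
          have "(\<Sum>t\<in>M2set K x a (m - 1 - sl) (r - sr). gw_weight \<mu> t) =
              ?Q * (?F (N1 K ?a) (int (m - 1 - sl) - int h) * ?F (1 + N2 K ?a) (int (r - sr) + 1))"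
          proof -
            have "M2set K x a (m - 1 - sl) (r - sr) = Mset K ?a (m - 1 - sl) (r - sr)"
              using M2_eq[OF x] True by simp
            then show ?thesis using Suc.IH[OF sa, of "m - 1 - sl" "r - sr"] by (simp only:)
          qed
          also have "int (m - 1 - sl) - int h = int m - int (Suc h) - int sl" using that by simp
          also have "int (r - sr) + 1 = int r + 1 - int sr" using that by simp
          finally show ?thesis .
        qed
        have "(\<Sum>sl<m. \<Sum>sr\<le>r. ?F (snd x - 1) (int sl) *
            (\<Sum>t\<in>M2set K x a (m - 1 - sl) (r - sr). gw_weight \<mu> t) * ?F (fst x - snd x) (int sr))
          = (\<Sum>sl<m. \<Sum>sr\<le>r. ?Q * ((?F (snd x - 1) (int sl) * ?A sl) * (?F (fst x - snd x) (int sr) * ?B sr)))"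
          apply (intro sum.cong refl)
          subgoal for sl sr by (subst S2) (auto simp: mult_ac)
          done
        also have "\<dots> = ?Q * ((\<Sum>sl<m. ?F (snd x - 1) (int sl) * ?A sl) *
                              (\<Sum>sr\<le>r. ?F (fst x - snd x) (int sr) * ?B sr))"
          by (rule dsum_factor)
        also have "(\<Sum>sl<m. ?F (snd x - 1) (int sl) * ?A sl) = ?F (snd x - 1 + N1 K ?a) (int m - int (Suc h))"
        proof -
          have m: "{..<m} = {..m - 1}" using False by auto
          show ?thesis unfolding m by (rule F_conv[symmetric]) simp
        qed
        also have "(\<Sum>sr\<le>r. ?F (fst x - snd x) (int sr) * ?B sr) = ?F (fst x - snd x + (1 + N2 K ?a)) (int r + 1)"
        proof -
          have "?F (fst x - snd x + (1 + N2 K ?a)) (int r + 1) =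
              (\<Sum>sr\<le>Suc r. ?F (fst x - snd x) (int sr) * ?F (1 + N2 K ?a) (int r + 1 - int sr))"
            by (rule F_conv) simp
          also have "\<dots> = (\<Sum>sr\<le>r. ?F (fst x - snd x) (int sr) * ?B sr)"
            by (simp add: F_zero_size)
          finally show ?thesis by simp
        qed
        also have "snd x - 1 + N1 K ?a = N1 K a" using N1_rec[where a=a, OF x True] by simp
        also have "fst x - snd x + (1 + N2 K ?a) = 1 + N2 K a" using N2_rec[where a=a, OF x True] by simp
        finally show ?thesis using True by (simp add: mult_ac fun_upd_def)
      qed
      have "(\<Sum>T\<in>Mset K a m r. gw_weight \<mu> T) =
          (\<Sum>x\<in>IK K. (if 1 \<le> a x then \<mu> (fst x) * Qh \<mu> K h (a(x := a x - 1)) else 0) * ?FF)"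
        using decomp[OF muK, where m=m and a=a and r=r] False inner by simp
      also have "\<dots> = (\<Sum>x\<in>IK K. (if 1 \<le> a x then \<mu> (fst x) * Qh \<mu> K h (a(x := a x - 1)) else 0)) * ?FF"
        by (simp add: sum_distrib_right)
      also have "(\<Sum>x\<in>IK K. (if 1 \<le> a x then \<mu> (fst x) * Qh \<mu> K h (a(x := a x - 1)) else 0)) = Qh \<mu> K (Suc h) a"
        using Qh_rec[OF Suc.prems zero_less_Suc, of \<mu>, unfolded diff_Suc_1] by (rule sym)
      finally show ?thesis .
    qed
  }
qed

lemma vertex_eq:
  assumes "finite T" "u \<in> T" "pos T u = m"
  shows "vertex T m = u"
  unfolding vertex_def
proof (rule the_equality)
  show "u \<in> T \<and> card {v \<in> T. lex_less v u} = m" using assms by (simp add: pos_def)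
  fix v assume "v \<in> T \<and> card {w \<in> T. lex_less w v} = m"
  then show "v = u" using pos_inj[OF assms(1), of v u] assms by (simp add: pos_def)
qed

theorem proposition5:
  fixes \<mu> :: "nat \<Rightarrow> real" and K n m h :: nat and a :: "nat \<times> nat \<Rightarrow> nat"
  assumes "\<forall>k. 0 \<le> \<mu> k"
    and "K > 0"
    and "\<forall>k>K. \<mu> k = 0"
    and "(\<Sum>k\<le>K. \<mu> k) = 1"
    and "(\<Sum>k\<le>K. real k * \<mu> k) = 1"
    and "\<mu> 0 + \<mu> 1 \<noteq> 1"
    and "gw_size_prob \<mu> (n + 1) > 0"
    and "\<forall>i. i \<notin> IK K \<longrightarrow> a i = 0"
    and "(\<Sum>i\<in>IK K. a i) = h"
    and "m \<le> n"
  shows "lineage_prob \<mu> K n m a =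
    Qh \<mu> K h a *
      (forest_size_prob \<mu> (N1 K a) (int m - int h) *
       forest_size_prob \<mu> (1 + N2 K a) (int n + 1 - int m))
      / gw_size_prob \<mu> (n + 1)"
proof -
  have seq: "{T. planar_tree T \<and> card T = n + 1 \<and> (\<forall>i\<in>IK K. lineage T (vertex T m) i = a i)}
      = Mset K a m (n - m)"
  proof (intro set_eqI iffI)
    fix T assume "T \<in> {T. planar_tree T \<and> card T = n + 1 \<and> (\<forall>i\<in>IK K. lineage T (vertex T m) i = a i)}"
    then have T: "planar_tree T" "card T = n + 1" "\<forall>i\<in>IK K. lineage T (vertex T m) i = a i" by auto
    obtain u where u: "u \<in> T" "pos T u = m" using pos_surj[OF planar_finite[OF T(1)], of m] T(2) assms(10) by auto
    have "vertex T m = u" by (rule vertex_eq[OF planar_finite[OF T(1)] u])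
    then show "T \<in> Mset K a m (n - m)" unfolding Mset_def using T u assms(10) by auto
  next
    fix T assume "T \<in> Mset K a m (n - m)"
    then obtain u where T: "planar_tree T" "card T = m + 1 + (n - m)" and
      u: "u \<in> T" "pos T u = m" "\<forall>x\<in>IK K. lineage T u x = a x" unfolding Mset_def by blast
    have "vertex T m = u" by (rule vertex_eq[OF planar_finite[OF T(1)] u(1,2)])
    then show "T \<in> {T. planar_tree T \<and> card T = n + 1 \<and> (\<forall>i\<in>IK K. lineage T (vertex T m) i = a i)}"
      using T u assms(10) by auto
  qed
  have M: "(\<Sum>T\<in>Mset K a m (n - m). gw_weight \<mu> T) =
    Qh \<mu> K h a * (forest_size_prob \<mu> (N1 K a) (int m - int h) *
                   forest_size_prob \<mu> (1 + N2 K a) (int (n - m) + 1))"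
    by (rule main[OF assms(3) assms(9)])
  have "int (n - m) + 1 = int n + 1 - int m" using assms(10) by simp
  then show ?thesis unfolding lineage_prob_def seq M by (simp only:)
qed

end
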